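(* For every integer $n\ge1$, $$\sum_{k=1}^n\frac{\binom{2n}{k}\left(\frac{1}{k+1}-10\right)}{4^k}=-\frac{2n+1}{n+1}\cdot\frac{\binom{2n}{n}}{4^n}+\frac{(18n+5)2^{4n}-(16n+4)5^{2n}}{(2n+1)2^{4n}}-\frac{3(4n+1)}{2(2n+1)}\cdot\frac{5^{2n}}{2^{4n}}\sum_{k=1}^n\binom{2k}{k}\left(\frac{4}{25}\right)^k.$$ *)

theory Defs
  imports Complex_Main
begin

end

theory Submission
  imports Defs
begin

definition T :: "nat \<Rightarrow> nat \<Rightarrow> real" where
  "T m j = (\<Sum>k=0..j. real (m choose k) / 4 ^ k)"

lemma T_Suc: "T m (Suc j) = T m j + real (m choose Suc j) / 4 ^ Suc j"
  by (simp add: T_def)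

lemma T_pascal: "T (Suc m) (Suc j) = T m (Suc j) + T m j / 4"
proof -
  have "T (Suc m) (Suc j) = 1 + (\<Sum>k=0..j. real (Suc m choose Suc k) / 4 ^ Suc k)"
    unfolding T_def by (subst sum.atLeast0_atMost_Suc_shift) simp
  also have "\<dots> = 1 + (\<Sum>k=0..j. real (m choose Suc k) / 4 ^ Suc k) + (\<Sum>k=0..j. real (m choose k) / 4 ^ Suc k)"
    by (simp add: sum.distrib add_divide_distrib)
  also have "1 + (\<Sum>k=0..j. real (m choose Suc k) / 4 ^ Suc k) = T m (Suc j)"
    unfolding T_def sum.atLeast0_atMost_Suc_shift by simp
  also have "(\<Sum>k=0..j. real (m choose k) / 4 ^ Suc k) = T m j / 4"
    unfolding T_def by (simp add: sum_divide_distrib mult_ac)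
  finally show ?thesis .
qed

lemma T_odd: "T (Suc (2*n)) n = 5/4 * T (2*n) n - real (2*n choose n) / 4 ^ Suc n"
proof (cases n)
  case 0 then show ?thesis by (simp add: T_def)
next
  case (Suc j)
  have 1: "T (Suc (2*n)) n = T (2*n) n + T (2*n) j / 4" using T_pascal[of "2*n" j] Suc by simp
  have "T (2*n) n = T (2*n) j + real (2*n choose n) / 4 ^ n" using T_Suc[of "2*n" j] Suc by simp
  then have 2: "T (2*n) j = T (2*n) n - real (2*n choose n) / 4 ^ n" by simp
  show ?thesis unfolding 1 2 by (simp add: field_simps)
qed

lemma binom1: "real (Suc (2*n) choose Suc n) * (real n + 1) = (2 * real n + 1) * real (2*n choose n)"
proof -
  have "real (Suc n) * real (Suc (2*n) choose Suc n) = real (Suc (2*n)) * real (2*n choose n)"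
    by (metis of_nat_mult Suc_times_binomial)
  then show ?thesis by (simp add: algebra_simps)
qed

lemma binom2: "real (2*Suc n choose Suc n) = 2 * real (Suc (2*n) choose Suc n)"
proof -
  have "2*Suc n = Suc (Suc (2*n))" by simp
  then have "(2*Suc n choose Suc n) = (Suc (2*n) choose n) + (Suc (2*n) choose Suc n)" by simp
  moreover have "(Suc (2*n) choose n) = (Suc (2*n) choose Suc n)"
    using binomial_symmetric[of n "Suc (2*n)"] by simp
  ultimately show ?thesis by simp
qed

lemma h_rec: "T (2*Suc n) (Suc n) = 25/16 * T (2*n) n + real (2*n choose n) * (3*real n - 1) / (16 * (real n + 1) * 4^n)"
proof -
  have a: "T (2*Suc n) (Suc n) = T (Suc (2*n)) (Suc n) + T (Suc (2*n)) n / 4"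
    using T_pascal[of "Suc (2*n)" n] by simp
  have b: "T (Suc (2*n)) (Suc n) = T (Suc (2*n)) n + real (Suc (2*n) choose Suc n) / 4 ^ Suc n"
    by (rule T_Suc)
  have c: "real (Suc (2*n) choose Suc n) = (2 * real n + 1) * real (2*n choose n) / (real n + 1)"
    using binom1[of n] by (simp add: field_simps)
  have P: "(4::real)^n > 0" by simp
  have n1: "real n + 1 > 0" by simp
  show ?thesis unfolding a b T_odd c
    using P n1 by (simp add: divide_simps) (simp add: algebra_simps)
qed

lemma arith_step:
  fixes P Q QQ X S B B2 n m :: real
  assumes P: "P > 0" and m: "m = n + 1" "m > 0" and B2: "B2 = 2 * (2 * n + 1) * B / m"
    and QQ: "QQ = 25/16 * Q" and QX: "QQ * X = 1 / (4 * P)"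
  shows "25/16 * (Q * (4/5 + 3/10 * S) + B / (5 * P)) + B * (3 * n - 1) / (16 * m * P)
     = QQ * (4/5 + 3/10 * (S + B2 * X)) + B2 / (5 * (4 * P))"
proof -
  have "QQ * (4/5 + 3/10 * (S + B2 * X)) = QQ * (4/5 + 3/10 * S) + 3/10 * B2 * (QQ * X)"
    by (simp add: algebra_simps)
  also have "\<dots> = QQ * (4/5 + 3/10 * S) + 3/10 * B2 * (1 / (4 * P))" by (simp only: QX)
  also have "\<dots> = 25/16 * (Q * (4/5 + 3/10 * S)) + 3/10 * B2 / (4 * P)" unfolding QQ by simp
  finally have e: "QQ * (4/5 + 3/10 * (S + B2 * X)) = 25/16 * (Q * (4/5 + 3/10 * S)) + 3/10 * B2 / (4 * P)" .
  have n: "n = m - 1" using m by simp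
  show ?thesis unfolding e unfolding B2 n using P m(2) by (simp add: field_simps)
qed

lemma h_closed: "T (2*n) n = (25/16)^n * (4/5 + 3/10 * (\<Sum>k=1..n. real (2*k choose k) * (4/25) ^ k)) + real (2*n choose n) / (5 * 4^n)"
proof (induction n)
  case 0 then show ?case by (simp add: T_def)
next
  case (Suc n)
  have c: "real (2*Suc n choose Suc n) = 2 * (2 * real n + 1) * real (2*n choose n) / (real n + 1)"
    using binom1[of n] binom2[of n] by (simp add: field_simps)
  have p: "(25/16::real)^Suc n * (4/25)^Suc n = 1 / (4 * 4^n)"
  proof -
    have "(25/16::real)^Suc n * (4/25)^Suc n = (25/16 * (4/25))^Suc n" by (rule power_mult_distrib[symmetric])
    also have "(25/16 * (4/25)::real) = 1/4" by simp
    also have "(1/4::real)^Suc n = 1 / 4^Suc n" by (rule power_one_over)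
    finally show ?thesis by simp
  qed
  have s: "(\<Sum>k=1..Suc n. real (2*k choose k) * (4/25::real) ^ k) = (\<Sum>k=1..n. real (2*k choose k) * (4/25) ^ k) + real (2*Suc n choose Suc n) * (4/25) ^ Suc n"
    by simp
  have "25/16 * ((25/16)^n * (4/5 + 3/10 * (\<Sum>k=1..n. real (2*k choose k) * (4/25::real) ^ k)) + real (2*n choose n) / (5 * 4^n)) + real (2*n choose n) * (3 * real n - 1) / (16 * (real n + 1) * 4^n)
     = (25/16)^Suc n * (4/5 + 3/10 * ((\<Sum>k=1..n. real (2*k choose k) * (4/25::real) ^ k) + real (2*Suc n choose Suc n) * (4/25)^Suc n)) + real (2*Suc n choose Suc n) / (5 * (4 * 4^n))"
    by (rule arith_step) (use c p in auto)
  then show ?case unfolding h_rec Suc s by simp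
qed

lemma G_eq: "(\<Sum>k=0..n. real (2*n choose k) / (real k + 1) / 4 ^ k) = 4 / (2 * real n + 1) * (T (Suc (2*n)) (Suc n) - 1)"
proof -
  have t: "real (2*n choose k) / (real k + 1) / 4 ^ k = 4 / (2 * real n + 1) * (real (Suc (2*n) choose Suc k) / 4 ^ Suc k)" for k
  proof -
    have "real (Suc k) * real (Suc (2*n) choose Suc k) = real (Suc (2*n)) * real (2*n choose k)"
      by (metis of_nat_mult Suc_times_binomial)
    then have e: "real (Suc (2*n) choose Suc k) = (2 * real n + 1) * real (2*n choose k) / (real k + 1)"
      by (simp add: field_simps)
    have g: "x / a / c = 4 / b * ((b * x / a) / (4 * c))" if "a > 0" "b > 0" "c > 0" for a b c x :: real
      using that by (simp add: field_simps)
    show ?thesis unfolding e power_Suc by (rule g) auto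
  qed
  have "(\<Sum>k=0..n. real (2*n choose k) / (real k + 1) / 4 ^ k) = 4 / (2 * real n + 1) * (\<Sum>k=0..n. real (Suc (2*n) choose Suc k) / 4 ^ Suc k)"
    unfolding t by (simp add: sum_distrib_left)
  also have "(\<Sum>k=0..n. real (Suc (2*n) choose Suc k) / 4 ^ Suc k) = T (Suc (2*n)) (Suc n) - 1"
    unfolding T_def sum.atLeast0_atMost_Suc_shift by simp
  finally show ?thesis .
qed

lemma final_arith:
  fixes n m P R W S B B1 h G :: real
  assumes n: "n \<ge> 0" and m: "m = n + 1" and P: "P > 0" and R: "R > 0"
    and B1: "B1 * m = (2 * n + 1) * B"
    and h: "h = W / R * (4/5 + 3/10 * S) + B / (5 * P)"
    and G: "G = 4 / (2 * n + 1) * (5/4 * h - B / (4 * P) + B1 / (4 * P) - 1)"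
  shows "G - 10 * h + 9 = - ((2 * n + 1) / m) * (B / P)
      + ((18 * n + 5) * R - (16 * n + 4) * W) / ((2 * n + 1) * R)
      - (3 * (4 * n + 1)) / (2 * (2 * n + 1)) * (W / R) * S"
proof -
  have m0: "m > 0" using m n by simp
  have d: "2 * n + 1 > 0" using n by simp
  have B1': "B1 = (2 * n + 1) * B / m" using B1 m0 by (simp add: field_simps)
  define q where "q = 2 * n + 1"
  have q: "2 * n + 1 = q" using q_def by simp
  have q0: "q > 0" using d q by simp
  have "G - 10 * h + 9 = - (q / m) * (B / P)
      + ((18 * n + 5) * R - (16 * n + 4) * W) / (q * R)
      - (3 * (4 * n + 1)) / (2 * q) * (W / R) * S"
    unfolding G h B1' q using m0 q0 P R
    apply (simp add: field_simps)
    unfolding m q_def by (simp add: algebra_simps)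
  then show ?thesis unfolding q .
qed

theorem mainTheorem14:
  fixes n :: nat
  assumes "n \<ge> 1"
  shows "(\<Sum>k=1..n. real (2*n choose k) * (1 / (real k + 1) - 10) / 4 ^ k)
    = - ((2 * real n + 1) / (real n + 1)) * (real (2*n choose n) / 4 ^ n)
      + ((18 * real n + 5) * 2 ^ (4*n) - (16 * real n + 4) * 5 ^ (2*n)) / ((2 * real n + 1) * 2 ^ (4*n))
      - (3 * (4 * real n + 1)) / (2 * (2 * real n + 1)) * (5 ^ (2*n) / 2 ^ (4*n))
        * (\<Sum>k=1..n. real (2*k choose k) * (4/25) ^ k)"
proof -
  let ?f = "\<lambda>k. real (2*n choose k) * (1 / (real k + 1) - 10) / 4 ^ k"
  let ?S = "\<Sum>k=1..n. real (2*k choose k) * (4/25::real) ^ k"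
  define G where "G = (\<Sum>k=0..n. real (2*n choose k) / (real k + 1) / 4 ^ k)"
  have sp: "sum ?f {0..n} = ?f 0 + sum ?f {Suc 0..n}" by (rule sum.atLeast_Suc_atMost) simp
  have fk: "?f k = real (2*n choose k) / (real k + 1) / 4 ^ k - 10 * (real (2*n choose k) / 4 ^ k)" for k
    by (simp add: diff_divide_distrib right_diff_distrib)
  have s0: "sum ?f {0..n} = G - 10 * T (2*n) n"
    unfolding fk G_def T_def by (simp add: sum_subtractf sum_distrib_left)
  have L: "sum ?f {1..n} = G - 10 * T (2*n) n + 9" using sp s0 by simp
  have Q: "(25/16::real)^n = 5^(2*n)/2^(4*n)" by (simp add: power_mult power_divide)
  have hc: "T (2*n) n = 5^(2*n)/2^(4*n) * (4/5 + 3/10 * ?S) + real (2*n choose n) / (5 * 4^n)"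
    using h_closed[of n] unfolding Q .
  have Tn: "T (Suc (2*n)) (Suc n) = 5/4 * T (2*n) n - real (2*n choose n) / (4 * 4^n) + real (Suc (2*n) choose Suc n) / (4 * 4^n)"
    using T_Suc[of "Suc (2*n)" n] T_odd[of n] by simp
  have Gc: "G = 4 / (2 * real n + 1) * (5/4 * T (2*n) n - real (2*n choose n) / (4 * 4^n) + real (Suc (2*n) choose Suc n) / (4 * 4^n) - 1)"
    unfolding G_def G_eq Tn ..
  show ?thesis unfolding L
    by (rule final_arith[OF _ refl _ _ binom1 hc Gc]) auto
qed

end
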